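(* Suppose $S_X=S_Y=S$ is a finite nonempty set and $\varphi:S\times S\to\mathbb{R}$ is symmetric, i.e., $\varphi(a,b)=\varphi(b,a)$ for all $a,b\in S$. Then $\varphi\equiv0$ is enforceable if and only if there exists a trivial autocratic strategy or $\max_{\tau_X\in\Delta(S_X)}\min_{\tau_Y\in\Delta(S_Y)}\varphi(\tau_X,\tau_Y)=0$.
   Context: Two players $X,Y$ play a repeated game; $\Delta(S)$ denotes the probability distributions on $S$; $\varphi$ is extended bilinearly to mixed actions, $\varphi(\tau_X,\tau_Y)=\mathbb{E}_{s_X\sim\tau_X,s_Y\sim\tau_Y}[\varphi(s_X,s_Y)]$. Histories: $\mathcal{H}=\bigcup_{T\ge0}(S_X\times S_Y)^T$; behavioral strategies are maps $\sigma:\mathcal{H}\to\Delta(S)$; players independently draw actions each round from their strategies evaluated at the history of realized action pairs, with $\mathbb{E}_{\sigma_X,\sigma_Y}$ the expectation over the resulting play. For $\lambda\in[0,1)$, $\sigma_X$ is $(\varphi,\lambda)$-autocratic if for every behavioral strategy $\sigma_Y$, $\mathbb{E}_{\sigma_X,\sigma_Y}[(1-\lambda)\sum_{t\ge0}\lambda^t\varphi(s_X^t,s_Y^t)]=0$; it is $(\varphi,1)$-autocratic if for every $\sigma_Y$ the limit $\lim_{T\to\infty}\frac1{T+1}\sum_{t=0}^T\mathbb{E}_{\sigma_X,\sigma_Y}[\varphi(s_X^t,s_Y^t)]$ exists and equals $0$. $\varphi\equiv0$ is enforceable if a $(\varphi,\lambda)$-autocratic behavioral strategy exists for some $\lambda\in[0,1]$.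 A trivial autocratic strategy is a mixed action $\tau_X\in\Delta(S_X)$ with $\varphi(\tau_X,s_Y)=0$ for all $s_Y\in S_Y$, played unconditionally in every round. *)

theory Defs
  imports "HOL-Probability.Probability"
begin

text \<open>Common action set S is modelled as a finite type 'a (nonempty automatically).\<close>

type_synonym 'a history = "('a \<times> 'a) list"
type_synonym 'a strategy = "'a history \<Rightarrow> 'a pmf"

definition phi_mix :: "('a \<Rightarrow> 'a \<Rightarrow> real) \<Rightarrow> 'a pmf \<Rightarrow> 'a pmf \<Rightarrow> real" where
  "phi_mix \<phi> \<tau>X \<tau>Y = measure_pmf.expectation (pair_pmf \<tau>X \<tau>Y) (\<lambda>(a, b). \<phi> a b)"

fun hist_pmf :: "'a strategy \<Rightarrow> 'a strategy \<Rightarrow> nat \<Rightarrow> 'a history pmf" where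
  "hist_pmf \<sigma>X \<sigma>Y 0 = return_pmf []"
| "hist_pmf \<sigma>X \<sigma>Y (Suc t) =
     bind_pmf (hist_pmf \<sigma>X \<sigma>Y t)
       (\<lambda>h. map_pmf (\<lambda>p. h @ [p]) (pair_pmf (\<sigma>X h) (\<sigma>Y h)))"

definition round_pmf :: "'a strategy \<Rightarrow> 'a strategy \<Rightarrow> nat \<Rightarrow> ('a \<times> 'a) pmf" where
  "round_pmf \<sigma>X \<sigma>Y t = bind_pmf (hist_pmf \<sigma>X \<sigma>Y t) (\<lambda>h. pair_pmf (\<sigma>X h) (\<sigma>Y h))"

definition exp_round :: "('a \<Rightarrow> 'a \<Rightarrow> real) \<Rightarrow> 'a strategy \<Rightarrow> 'a strategy \<Rightarrow> nat \<Rightarrow> real" where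
  "exp_round \<phi> \<sigma>X \<sigma>Y t = measure_pmf.expectation (round_pmf \<sigma>X \<sigma>Y t) (\<lambda>(a, b). \<phi> a b)"

text \<open>For lambda < 1 the expectation of the discounted
  sum is written as the discounted sum of per-round expectations (legitimate since phi is
  bounded on the finite action set).\<close>
definition autocratic :: "('a \<Rightarrow> 'a \<Rightarrow> real) \<Rightarrow> real \<Rightarrow> 'a strategy \<Rightarrow> bool" where
  "autocratic \<phi> \<delta> \<sigma>X \<longleftrightarrow>
     (if \<delta> < 1
      then (\<forall>\<sigma>Y. (1 - \<delta>) * (\<Sum>t. \<delta> ^ t * exp_round \<phi> \<sigma>X \<sigma>Y t) = 0)
      else (\<forall>\<sigma>Y. (\<lambda>T. (\<Sum>t\<le>T. exp_round \<phi> \<sigma>X \<sigma>Y t) / real (T + 1)) \<longlonglongrightarrow> 0))"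

definition enforceable :: "('a \<Rightarrow> 'a \<Rightarrow> real) \<Rightarrow> bool" where
  "enforceable \<phi> \<longleftrightarrow> (\<exists>\<delta>\<in>{0..1}. \<exists>\<sigma>X. autocratic \<phi> \<delta> \<sigma>X)"

definition has_trivial_autocratic :: "('a \<Rightarrow> 'a \<Rightarrow> real) \<Rightarrow> bool" where
  "has_trivial_autocratic \<phi> \<longleftrightarrow> (\<exists>\<tau>X. \<forall>sY. phi_mix \<phi> \<tau>X (return_pmf sY) = 0)"

end

theory Submission
  imports Defs "HOL-Analysis.Analysis" "HOL-Real_Asymp.Real_Asymp"
begin


lemma exp_fin:
  fixes f :: "'b \<Rightarrow> real"
  assumes "finite A" "set_pmf M \<subseteq> A"
  shows "measure_pmf.expectation M f = (\<Sum>a\<in>A. pmf M a * f a)"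
  using integral_measure_pmf[OF assms(1), of M f] assms(2) by auto

lemma exp_bind:
  fixes f :: "'c \<Rightarrow> real"
  assumes M: "finite (set_pmf M)" and N: "\<And>x. x \<in> set_pmf M \<Longrightarrow> finite (set_pmf (N x))"
  shows "measure_pmf.expectation (bind_pmf M N) f =
         measure_pmf.expectation M (\<lambda>x. measure_pmf.expectation (N x) f)"
proof -
  define U where "U = (\<Union>x\<in>set_pmf M. set_pmf (N x))"
  have U: "finite U" using assms by (auto simp: U_def)
  have "measure_pmf.expectation (bind_pmf M N) f = (\<Sum>y\<in>U. pmf (bind_pmf M N) y * f y)"
    by (rule exp_fin[OF U]) (auto simp: U_def)
  also have "\<dots> = (\<Sum>y\<in>U. (\<Sum>x\<in>set_pmf M. pmf M x * pmf (N x) y) * f y)"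
    by (simp add: pmf_bind exp_fin[OF M])
  also have "\<dots> = (\<Sum>x\<in>set_pmf M. pmf M x * (\<Sum>y\<in>U. pmf (N x) y * f y))"
    by (simp add: sum_distrib_left sum_distrib_right sum.swap[of _ U] mult.assoc)
  also have "\<dots> = (\<Sum>x\<in>set_pmf M. pmf M x * measure_pmf.expectation (N x) f)"
  proof (intro sum.cong refl arg_cong2[where f="(*)"])
    fix x assume "x \<in> set_pmf M"
    then show "(\<Sum>y\<in>U. pmf (N x) y * f y) = measure_pmf.expectation (N x) f"
      by (subst exp_fin[OF U]) (auto simp: U_def)
  qed
  also have "\<dots> = measure_pmf.expectation M (\<lambda>x. measure_pmf.expectation (N x) f)"
    by (rule exp_fin[OF M subset_refl, symmetric])
  finally show ?thesis .
qed

lemma phi_mix_sum: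
  fixes \<phi> :: "'a::finite \<Rightarrow> 'a \<Rightarrow> real"
  shows "phi_mix \<phi> \<tau> \<rho> = (\<Sum>a\<in>UNIV. \<Sum>b\<in>UNIV. pmf \<tau> a * pmf \<rho> b * \<phi> a b)"
  unfolding phi_mix_def
  by (subst exp_fin[of "UNIV \<times> UNIV"], simp, simp, simp only: sum.cartesian_product)
     (rule sum.cong, simp, clarsimp simp: pmf_pair)

lemma phi_mix_ret:
  fixes \<phi> :: "'a::finite \<Rightarrow> 'a \<Rightarrow> real"
  shows "phi_mix \<phi> \<tau> (return_pmf b) = (\<Sum>a\<in>UNIV. pmf \<tau> a * \<phi> a b)"
proof -
  have "\<And>a. (\<Sum>c\<in>UNIV. pmf \<tau> a * pmf (return_pmf b) c * \<phi> a c) = pmf \<tau> a * \<phi> a b"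
  proof -
    fix a
    have "(\<Sum>c\<in>UNIV. pmf \<tau> a * pmf (return_pmf b) c * \<phi> a c) = (\<Sum>c\<in>UNIV. if c = b then pmf \<tau> a * \<phi> a b else 0)"
      by (rule sum.cong) (auto simp: pmf_return)
    then show "(\<Sum>c\<in>UNIV. pmf \<tau> a * pmf (return_pmf b) c * \<phi> a c) = pmf \<tau> a * \<phi> a b"
      by simp
  qed
  then show ?thesis unfolding phi_mix_sum by simp
qed

lemma phi_mix_lin2:
  fixes \<phi> :: "'a::finite \<Rightarrow> 'a \<Rightarrow> real"
  shows "phi_mix \<phi> \<tau> \<rho> = (\<Sum>b\<in>UNIV. pmf \<rho> b * phi_mix \<phi> \<tau> (return_pmf b))"
  unfolding phi_mix_ret
  by (simp add: phi_mix_sum, subst sum.swap) (simp add: sum_distrib_left mult_ac)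

lemma phi_mix_sym:
  fixes \<phi> :: "'a::finite \<Rightarrow> 'a \<Rightarrow> real"
  assumes "\<And>a b. \<phi> a b = \<phi> b a"
  shows "phi_mix \<phi> \<tau> \<rho> = phi_mix \<phi> \<rho> \<tau>"
  unfolding phi_mix_sum by (subst sum.swap) (simp add: assms mult_ac)

lemma sum_pmf_UNIV: "(\<Sum>a\<in>(UNIV::'a::finite set). pmf \<tau> a) = 1"
  by (rule sum_pmf_eq_1) auto

lemma phi_mix_ge:
  fixes \<phi> :: "'a::finite \<Rightarrow> 'a \<Rightarrow> real"
  assumes "\<And>b. phi_mix \<phi> \<tau> (return_pmf b) \<ge> c"
  shows "phi_mix \<phi> \<tau> \<rho> \<ge> c"
proof -
  have "(\<Sum>b\<in>UNIV. pmf \<rho> b * c) \<le> (\<Sum>b\<in>UNIV. pmf \<rho> b * phi_mix \<phi> \<tau> (return_pmf b))"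
    by (intro sum_mono mult_left_mono assms) auto
  then show ?thesis by (subst phi_mix_lin2) (simp add: sum_distrib_right[symmetric] sum_pmf_UNIV)
qed

lemma phi_mix_le:
  fixes \<phi> :: "'a::finite \<Rightarrow> 'a \<Rightarrow> real"
  assumes "\<And>b. phi_mix \<phi> \<tau> (return_pmf b) \<le> c"
  shows "phi_mix \<phi> \<tau> \<rho> \<le> c"
proof -
  have "(\<Sum>b\<in>UNIV. pmf \<rho> b * c) \<ge> (\<Sum>b\<in>UNIV. pmf \<rho> b * phi_mix \<phi> \<tau> (return_pmf b))"
    by (intro sum_mono mult_left_mono assms) auto
  then show ?thesis by (subst phi_mix_lin2) (simp add: sum_distrib_right[symmetric] sum_pmf_UNIV)
qed

lemma exp_bound:
  fixes \<phi> :: "'a::finite \<Rightarrow> 'a \<Rightarrow> real" and M :: "('a \<times> 'a) pmf"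
  shows "\<bar>measure_pmf.expectation M (\<lambda>(a, b). \<phi> a b)\<bar> \<le> (\<Sum>p\<in>UNIV. \<bar>case p of (a, b) \<Rightarrow> \<phi> a b\<bar>)"
proof -
  have "\<bar>measure_pmf.expectation M (\<lambda>(a, b). \<phi> a b)\<bar> = \<bar>\<Sum>p\<in>UNIV. pmf M p * (case p of (a, b) \<Rightarrow> \<phi> a b)\<bar>"
    by (subst exp_fin[of UNIV]) auto
  also have "\<dots> \<le> (\<Sum>p\<in>UNIV. \<bar>pmf M p * (case p of (a, b) \<Rightarrow> \<phi> a b)\<bar>)" by (rule sum_abs)
  also have "\<dots> \<le> (\<Sum>p\<in>UNIV. \<bar>case p of (a, b) \<Rightarrow> \<phi> a b\<bar>)"
    by (intro sum_mono) (auto simp: abs_mult intro!: mult_left_le_one_le pmf_le_1)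
  finally show ?thesis .
qed

lemma pmf_of_weights:
  fixes w :: "'a::finite \<Rightarrow> real"
  assumes "\<And>a. w a \<ge> 0" "sum w UNIV = 1"
  shows "\<exists>\<tau>. \<forall>a. pmf \<tau> a = w a"
proof -
  have "(\<integral>\<^sup>+x. ennreal (w x) \<partial>count_space UNIV) = 1"
  proof -
    have "(\<integral>\<^sup>+x. ennreal (w x) \<partial>count_space UNIV) = (\<Sum>a\<in>UNIV. ennreal (w a))"
      by (rule nn_integral_count_space_finite) simp
    also have "\<dots> = ennreal (sum w UNIV)" using assms(1) by (rule sum_ennreal)
    finally show ?thesis using assms(2) by simp
  qed
  then show ?thesis using pmf_embed_pmf[of w] assms by blast
qed

lemma hist_fin: "finite (set_pmf (hist_pmf (\<sigma>X :: ('a::finite) strategy) \<sigma>Y t))"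
  by (induction t) auto

lemma exp_round_hist:
  fixes \<phi> :: "'a::finite \<Rightarrow> 'a \<Rightarrow> real"
  shows "exp_round \<phi> \<sigma>X \<sigma>Y t =
    measure_pmf.expectation (hist_pmf \<sigma>X \<sigma>Y t) (\<lambda>h. phi_mix \<phi> (\<sigma>X h) (\<sigma>Y h))"
  unfolding exp_round_def round_pmf_def phi_mix_def
  by (rule exp_bind[OF hist_fin]) auto



lemma exp_ge:
  fixes f :: "'b \<Rightarrow> real"
  assumes "finite (set_pmf M)" "\<And>x. x \<in> set_pmf M \<Longrightarrow> c \<le> f x"
  shows "c \<le> measure_pmf.expectation M f"
proof -
  have "c = (\<Sum>a\<in>set_pmf M. pmf M a * c)"
    using sum_pmf_eq_1[OF assms(1) subset_refl] by (simp add: sum_distrib_right[symmetric])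
  also have "\<dots> \<le> (\<Sum>a\<in>set_pmf M. pmf M a * f a)"
    by (intro sum_mono mult_left_mono assms) auto
  also have "\<dots> = measure_pmf.expectation M f" by (rule exp_fin[OF assms(1) subset_refl, symmetric])
  finally show ?thesis .
qed

lemma exp_le:
  fixes f :: "'b \<Rightarrow> real"
  assumes "finite (set_pmf M)" "\<And>x. x \<in> set_pmf M \<Longrightarrow> f x \<le> c"
  shows "measure_pmf.expectation M f \<le> c"
proof -
  have "(\<Sum>a\<in>set_pmf M. pmf M a * f a) \<le> (\<Sum>a\<in>set_pmf M. pmf M a * c)"
    by (intro sum_mono mult_left_mono assms) auto
  also have "\<dots> = c"
    using sum_pmf_eq_1[OF assms(1) subset_refl] by (simp add: sum_distrib_right[symmetric])
  finally show ?thesis using exp_fin[OF assms(1) subset_refl, of f] by simp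
qed

lemma ex_max_fin: fixes f :: "'a::finite \<Rightarrow> real" shows "\<exists>b. \<forall>b'. f b' \<le> f b"
proof -
  have "Max (range f) \<in> range f" by (intro Max_in) auto
  then obtain b where "Max (range f) = f b" by blast
  moreover have "f b' \<le> Max (range f)" for b' by (rule Max_ge) auto
  ultimately show ?thesis by metis
qed

lemma ex_min_fin: fixes f :: "'a::finite \<Rightarrow> real" shows "\<exists>b. \<forall>b'. f b \<le> f b'"
  using ex_max_fin[of "\<lambda>x. - f x"] by auto

lemma not_auto_pos:
  fixes e :: "nat \<Rightarrow> real"
  assumes ge: "\<And>t. c \<le> e t" and c: "c > 0" and bd: "\<And>t. \<bar>e t\<bar> \<le> B" and d: "0 \<le> \<delta>"
  shows "\<delta> < 1 \<Longrightarrow> (1 - \<delta>) * (\<Sum>t. \<delta> ^ t * e t) \<noteq> 0"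
    and "\<not> ((\<lambda>T. (\<Sum>t\<le>T. e t) / real (T + 1)) \<longlonglongrightarrow> 0)"
proof -
  assume d1: "\<delta> < 1"
  have sg: "summable (\<lambda>t. \<delta> ^ t)" using d d1 by (intro summable_geometric) simp
  have s1: "summable (\<lambda>t. \<delta> ^ t * e t)"
  proof (rule summable_comparison_test)
    show "\<exists>N. \<forall>n\<ge>N. norm (\<delta> ^ n * e n) \<le> \<delta> ^ n * B"
      using bd d by (auto simp: abs_mult intro!: mult_left_mono)
    show "summable (\<lambda>n. \<delta> ^ n * B)" using sg by (rule summable_mult2)
  qed
  have s2: "summable (\<lambda>t. \<delta> ^ t * c)" using sg by (rule summable_mult2)
  have "(\<Sum>t. \<delta> ^ t * c) \<le> (\<Sum>t. \<delta> ^ t * e t)"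
    using s1 s2 ge d by (intro suminf_le) (auto intro: mult_left_mono)
  moreover have "(\<Sum>t. \<delta> ^ t * c) = c / (1 - \<delta>)"
    using suminf_mult2[OF sg, of c] suminf_geometric[of \<delta>] d d1 by simp
  ultimately have "c / (1 - \<delta>) \<le> (\<Sum>t. \<delta> ^ t * e t)" by simp
  then have "(1 - \<delta>) * (c / (1 - \<delta>)) \<le> (1 - \<delta>) * (\<Sum>t. \<delta> ^ t * e t)"
    using d1 by (intro mult_left_mono) auto
  then show "(1 - \<delta>) * (\<Sum>t. \<delta> ^ t * e t) \<noteq> 0" using d1 c by (cases "(\<Sum>t. \<delta> ^ t * e t) = 0") auto
next
  show "\<not> ((\<lambda>T. (\<Sum>t\<le>T. e t) / real (T + 1)) \<longlonglongrightarrow> 0)"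
  proof
    assume lim: "(\<lambda>T. (\<Sum>t\<le>T. e t) / real (T + 1)) \<longlonglongrightarrow> 0"
    have "c \<le> (\<Sum>t\<le>T. e t) / real (T + 1)" for T
    proof -
      have "(\<Sum>t\<le>T. c) \<le> (\<Sum>t\<le>T. e t)" by (intro sum_mono ge)
      then show ?thesis by (simp add: field_simps)
    qed
    then have "c \<le> 0" using LIMSEQ_le_const[OF lim] by blast
    then show False using c by simp
  qed
qed

lemma not_auto_neg:
  fixes e :: "nat \<Rightarrow> real"
  assumes ge: "\<And>t. e t \<le> - c" and c: "c > 0" and bd: "\<And>t. \<bar>e t\<bar> \<le> B" and d: "0 \<le> \<delta>"
  shows "\<delta> < 1 \<Longrightarrow> (1 - \<delta>) * (\<Sum>t. \<delta> ^ t * e t) \<noteq> 0"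
    and "\<not> ((\<lambda>T. (\<Sum>t\<le>T. e t) / real (T + 1)) \<longlonglongrightarrow> 0)"
proof -
  have ge': "c \<le> - e t" for t using ge[of t] by linarith
  have bd': "\<And>t. \<bar>- e t\<bar> \<le> B" using bd by simp
  assume d1: "\<delta> < 1"
  have sg: "summable (\<lambda>t. \<delta> ^ t)" using d d1 by (intro summable_geometric) simp
  have s1: "summable (\<lambda>t. \<delta> ^ t * e t)"
  proof (rule summable_comparison_test)
    show "\<exists>N. \<forall>n\<ge>N. norm (\<delta> ^ n * e n) \<le> \<delta> ^ n * B"
      using bd d by (auto simp: abs_mult intro!: mult_left_mono)
    show "summable (\<lambda>n. \<delta> ^ n * B)" using sg by (rule summable_mult2)
  qed
  have "(1 - \<delta>) * (\<Sum>t. \<delta> ^ t * - e t) \<noteq> 0" using not_auto_pos(1)[where e="\<lambda>t. - e t", OF ge' c bd' d d1] .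
  moreover have "(\<Sum>t. \<delta> ^ t * - e t) = - (\<Sum>t. \<delta> ^ t * e t)"
    using suminf_minus[OF s1] by simp
  ultimately show "(1 - \<delta>) * (\<Sum>t. \<delta> ^ t * e t) \<noteq> 0" by simp
next
  have ge': "c \<le> - e t" for t using ge[of t] by linarith
  have bd': "\<And>t. \<bar>- e t\<bar> \<le> B" using bd by simp
  show "\<not> ((\<lambda>T. (\<Sum>t\<le>T. e t) / real (T + 1)) \<longlonglongrightarrow> 0)"
  proof
    assume "(\<lambda>T. (\<Sum>t\<le>T. e t) / real (T + 1)) \<longlonglongrightarrow> 0"
    then have "(\<lambda>T. - ((\<Sum>t\<le>T. e t) / real (T + 1))) \<longlonglongrightarrow> - 0" by (rule tendsto_minus)
    then have "(\<lambda>T. (\<Sum>t\<le>T. - e t) / real (T + 1)) \<longlonglongrightarrow> 0" by (simp add: sum_negf)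
    then show False using not_auto_pos(2)[where e="\<lambda>t. - e t", OF ge' c bd' d] by blast
  qed
qed



definition bnd :: "('a::finite \<Rightarrow> 'a \<Rightarrow> real) \<Rightarrow> real" where
  "bnd \<phi> = (\<Sum>p\<in>UNIV. \<bar>case p of (a, b) \<Rightarrow> \<phi> a b\<bar>)"

lemma phi_mix_bnd:
  fixes \<phi> :: "'a::finite \<Rightarrow> 'a \<Rightarrow> real"
  shows "\<bar>phi_mix \<phi> \<tau> \<rho>\<bar> \<le> bnd \<phi>"
  unfolding phi_mix_def bnd_def by (rule exp_bound)

lemma exp_round_bnd:
  fixes \<phi> :: "'a::finite \<Rightarrow> 'a \<Rightarrow> real"
  shows "\<bar>exp_round \<phi> \<sigma>X \<sigma>Y t\<bar> \<le> bnd \<phi>"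
  unfolding exp_round_def bnd_def by (rule exp_bound)

lemma bb_phi:
  fixes \<phi> :: "'a::finite \<Rightarrow> 'a \<Rightarrow> real"
  shows "bdd_below (range (phi_mix \<phi> \<tau>))"
proof (rule bdd_belowI[of _ "- bnd \<phi>"])
  fix x assume "x \<in> range (phi_mix \<phi> \<tau>)"
  then obtain \<rho> where "x = phi_mix \<phi> \<tau> \<rho>" by blast
  then show "- bnd \<phi> \<le> x" using phi_mix_bnd[of \<phi> \<tau> \<rho>] by (auto simp: abs_le_iff)
qed

lemma gle:
  fixes \<phi> :: "'a::finite \<Rightarrow> 'a \<Rightarrow> real"
  shows "(INF \<rho>. phi_mix \<phi> \<tau> \<rho>) \<le> phi_mix \<phi> \<tau> \<rho>"
  by (rule cINF_lower[OF bb_phi]) simp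

lemma ba_g:
  fixes \<phi> :: "'a::finite \<Rightarrow> 'a \<Rightarrow> real"
  shows "bdd_above (range (\<lambda>\<tau>. INF \<rho>. phi_mix \<phi> \<tau> \<rho>))"
  unfolding bdd_above_def
proof (intro exI[of _ "bnd \<phi>"] ballI)
  fix x assume "x \<in> range (\<lambda>\<tau>. INF \<rho>. phi_mix \<phi> \<tau> \<rho>)"
  then obtain \<tau> where "x = (INF \<rho>. phi_mix \<phi> \<tau> \<rho>)" by blast
  then have "x \<le> phi_mix \<phi> \<tau> \<tau>" using gle by simp
  then show "x \<le> bnd \<phi>" using phi_mix_bnd[of \<phi> \<tau> \<tau>] by (simp add: abs_le_iff)
qed

lemma necessity:
  fixes \<phi> :: "'a::finite \<Rightarrow> 'a \<Rightarrow> real"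
  assumes sym: "\<And>a b. \<phi> a b = \<phi> b a" and au: "autocratic \<phi> \<delta> \<sigma>X" and d: "0 \<le> \<delta>"
  shows "(SUP \<tau>X. INF \<tau>Y. phi_mix \<phi> \<tau>X \<tau>Y) = 0"
proof (rule ccontr)
  define g where "g = (\<lambda>\<tau>. INF \<rho>. phi_mix \<phi> \<tau> \<rho>)"
  define v where "v = (SUP \<tau>. g \<tau>)"
  have ba: "bdd_above (range g)" unfolding g_def by (rule ba_g)
  have contra: False if ee: "\<And>t. e t = exp_round \<phi> \<sigma>X \<sigma>Y t"
      and c: "c > 0" and one: "(\<forall>t. c \<le> e t) \<or> (\<forall>t. e t \<le> - c)" for c e \<sigma>Y
  proof -
    have bd: "\<bar>e t\<bar> \<le> bnd \<phi>" for t unfolding ee by (rule exp_round_bnd)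
    show False
    proof (cases "\<delta> < 1")
      case True
      with au have eq: "(1 - \<delta>) * (\<Sum>t. \<delta> ^ t * e t) = 0" by (auto simp: autocratic_def ee)
      from one show False
      proof
        assume h: "\<forall>t. c \<le> e t"
        have "(1 - \<delta>) * (\<Sum>t. \<delta> ^ t * e t) \<noteq> 0"
          by (rule not_auto_pos(1)[where e=e, OF _ c bd d True]) (use h in blast)
        then show False using eq by contradiction
      next
        assume h: "\<forall>t. e t \<le> - c"
        have "(1 - \<delta>) * (\<Sum>t. \<delta> ^ t * e t) \<noteq> 0"
          by (rule not_auto_neg(1)[where e=e, OF _ c bd d True]) (use h in blast)
        then show False using eq by contradiction
      qed
    next
      case False
      with au have eq: "(\<lambda>T. (\<Sum>t\<le>T. e t) / real (T + 1)) \<longlonglongrightarrow> 0" by (auto simp: autocratic_def ee)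
      from one show False
      proof
        assume h: "\<forall>t. c \<le> e t"
        have "\<not> (\<lambda>T. (\<Sum>t\<le>T. e t) / real (T + 1)) \<longlonglongrightarrow> 0"
          by (rule not_auto_pos(2)[where e=e, OF _ c bd d]) (use h in blast)
        then show False using eq by contradiction
      next
        assume h: "\<forall>t. e t \<le> - c"
        have "\<not> (\<lambda>T. (\<Sum>t\<le>T. e t) / real (T + 1)) \<longlonglongrightarrow> 0"
          by (rule not_auto_neg(2)[where e=e, OF _ c bd d]) (use h in blast)
        then show False using eq by contradiction
      qed
    qed
  qed
  assume "(SUP \<tau>X. INF \<tau>Y. phi_mix \<phi> \<tau>X \<tau>Y) \<noteq> 0"
  then have "v \<noteq> 0" by (simp add: v_def g_def)
  then consider "v > 0" | "v < 0" by linarith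
  then show False
  proof cases
    case 1
    then obtain p where p: "0 < g p" using less_cSUP_iff[of UNIV g 0] ba by (auto simp: v_def)
    define \<sigma>Y :: "'a strategy" where "\<sigma>Y = (\<lambda>h. return_pmf (SOME b. \<forall>b'. phi_mix \<phi> (\<sigma>X h) (return_pmf b') \<le> phi_mix \<phi> (\<sigma>X h) (return_pmf b)))"
    have "g p \<le> exp_round \<phi> \<sigma>X \<sigma>Y t" for t
      unfolding exp_round_hist
    proof (rule exp_ge[OF hist_fin])
      fix h
      define b where "b = (SOME b. \<forall>b'. phi_mix \<phi> (\<sigma>X h) (return_pmf b') \<le> phi_mix \<phi> (\<sigma>X h) (return_pmf b))"
      have "\<forall>b'. phi_mix \<phi> (\<sigma>X h) (return_pmf b') \<le> phi_mix \<phi> (\<sigma>X h) (return_pmf b)"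
        unfolding b_def by (rule someI_ex) (rule ex_max_fin)
      then have "phi_mix \<phi> (\<sigma>X h) p \<le> phi_mix \<phi> (\<sigma>X h) (return_pmf b)" by - (rule phi_mix_le, auto)
      moreover have "phi_mix \<phi> (\<sigma>X h) p = phi_mix \<phi> p (\<sigma>X h)" by (rule phi_mix_sym[OF sym])
      moreover have "g p \<le> phi_mix \<phi> p (\<sigma>X h)" unfolding g_def by (rule gle)
      ultimately show "g p \<le> phi_mix \<phi> (\<sigma>X h) (\<sigma>Y h)" by (simp add: \<sigma>Y_def b_def)
    qed
    then show False by (intro contra[of "exp_round \<phi> \<sigma>X \<sigma>Y" \<sigma>Y "g p"] refl p) blast
  next
    case 2
    have gv: "g \<tau> \<le> v" for \<tau> unfolding v_def by (rule cSUP_upper[OF _ ba]) simp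
    define \<sigma>Y :: "'a strategy" where "\<sigma>Y = (\<lambda>h. return_pmf (SOME b. \<forall>b'. phi_mix \<phi> (\<sigma>X h) (return_pmf b) \<le> phi_mix \<phi> (\<sigma>X h) (return_pmf b')))"
    have "exp_round \<phi> \<sigma>X \<sigma>Y t \<le> - (- v)" for t
      unfolding exp_round_hist minus_minus
    proof (rule exp_le[OF hist_fin])
      fix h
      define b where "b = (SOME b. \<forall>b'. phi_mix \<phi> (\<sigma>X h) (return_pmf b) \<le> phi_mix \<phi> (\<sigma>X h) (return_pmf b'))"
      have "\<forall>b'. phi_mix \<phi> (\<sigma>X h) (return_pmf b) \<le> phi_mix \<phi> (\<sigma>X h) (return_pmf b')"
        unfolding b_def by (rule someI_ex) (rule ex_min_fin)
      then have "phi_mix \<phi> (\<sigma>X h) (return_pmf b) \<le> phi_mix \<phi> (\<sigma>X h) \<rho>" for \<rho> by - (rule phi_mix_ge, auto)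
      then have "phi_mix \<phi> (\<sigma>X h) (return_pmf b) \<le> g (\<sigma>X h)" unfolding g_def
        by (intro cINF_greatest) auto
      then show "phi_mix \<phi> (\<sigma>X h) (\<sigma>Y h) \<le> v" using gv[of "\<sigma>X h"] by (simp add: \<sigma>Y_def b_def)
    qed
    then show False by (intro contra[of "exp_round \<phi> \<sigma>X \<sigma>Y" \<sigma>Y "- v"] refl) (use 2 in auto)
  qed
qed



lemma ville:
  fixes A :: "'i::finite \<Rightarrow> 'j::finite \<Rightarrow> real"
  shows "(\<exists>y. (\<forall>j. 0 \<le> y j) \<and> sum y UNIV = 1 \<and> (\<forall>i. (\<Sum>j\<in>UNIV. A i j * y j) \<le> 0)) \<or>
         (\<exists>x. (\<forall>i. 0 \<le> x i) \<and> sum x UNIV = 1 \<and> (\<forall>j. (\<Sum>i\<in>UNIV. x i * A i j) > 0))"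
proof (cases "\<exists>y. (\<forall>j. 0 \<le> y j) \<and> sum y UNIV = 1 \<and> (\<forall>i. (\<Sum>j\<in>UNIV. A i j * y j) \<le> 0)")
  case True then show ?thesis by blast
next
  case False
  note ny = False
  define D where "D = {y :: real^'j. (\<forall>j. 0 \<le> y$j) \<and> (\<Sum>j\<in>UNIV. y$j) = 1}"
  define L where "L = (\<lambda>y :: real^'j. (\<chi> i. \<Sum>j\<in>UNIV. A i j * y$j) :: real^'i)"
  define Q where "Q = {z :: real^'i. \<forall>i. 0 \<le> z$i}"
  define K where "K = (\<Union>u\<in>L ` D. \<Union>z\<in>Q. {u + z})"
  have Lcont: "continuous_on S L" for S
    unfolding L_def by (intro continuous_intros)
  have Llin: "L (u *\<^sub>R y1 + v *\<^sub>R y2) = u *\<^sub>R L y1 + v *\<^sub>R L y2" for u v y1 y2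
    unfolding L_def by (simp add: vec_eq_iff sum.distrib sum_distrib_left algebra_simps)
  have "closed D"
    unfolding D_def
    by (intro closed_Collect_conj closed_Collect_all closed_Collect_le closed_Collect_eq continuous_intros)
  moreover have "bounded D"
    unfolding bounded_iff
  proof (intro exI ballI)
    fix y assume "y \<in> D"
    then have "(\<Sum>j\<in>UNIV. \<bar>y$j\<bar>) = 1" by (simp add: D_def)
    then show "norm y \<le> 1" using norm_le_l1_cart[of y] by simp
  qed
  ultimately have "compact D" by (simp add: compact_eq_bounded_closed)
  then have cLD: "compact (L ` D)" by (intro compact_continuous_image Lcont)
  have "closed Q" unfolding Q_def
    by (intro closed_Collect_all closed_Collect_le continuous_intros)
  then have "closed K" unfolding K_def using compact_closed_sums[OF cLD] by blast
  have "convex K"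
    unfolding convex_def
  proof (intro ballI allI impI)
    fix k1 k2 and u v :: real assume k: "k1 \<in> K" "k2 \<in> K" and uv: "0 \<le> u" "0 \<le> v" "u + v = 1"
    from k obtain y1 z1 y2 z2 where yz: "y1 \<in> D" "z1 \<in> Q" "k1 = L y1 + z1" "y2 \<in> D" "z2 \<in> Q" "k2 = L y2 + z2"
      unfolding K_def by blast
    have "u *\<^sub>R y1 + v *\<^sub>R y2 \<in> D"
      using yz uv unfolding D_def by (simp add: sum.distrib sum_distrib_left[symmetric])
    moreover have "u *\<^sub>R z1 + v *\<^sub>R z2 \<in> Q"
      using yz uv unfolding Q_def by simp
    moreover have "u *\<^sub>R k1 + v *\<^sub>R k2 = L (u *\<^sub>R y1 + v *\<^sub>R y2) + (u *\<^sub>R z1 + v *\<^sub>R z2)"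
      using yz by (simp add: Llin algebra_simps)
    ultimately show "u *\<^sub>R k1 + v *\<^sub>R k2 \<in> K" unfolding K_def by blast
  qed
  have "0 \<notin> K"
  proof
    assume "0 \<in> K"
    then obtain y z where yz: "y \<in> D" "z \<in> Q" "0 = L y + z" unfolding K_def by blast
    have "(\<Sum>j\<in>UNIV. A i j * y$j) \<le> 0" for i
    proof -
      have "(L y)$i = - z$i" using yz(3) by (simp add: vec_eq_iff eq_neg_iff_add_eq_0)
      then show ?thesis using yz(2) by (simp add: L_def Q_def)
    qed
    then show False using ny yz(1) unfolding D_def by blast
  qed
  obtain a b where ab: "a \<noteq> 0" "0 < b" "\<And>k. k \<in> K \<Longrightarrow> inner a k > b"
    using separating_hyperplane_closed_0[OF \<open>convex K\<close> \<open>closed K\<close> \<open>0 \<notin> K\<close>] by blast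
  define y0 :: "real^'j" where "y0 = (\<chi> j. 1 / real CARD('j))"
  have y0D: "y0 \<in> D" unfolding D_def y0_def by simp
  have inK: "L y + z \<in> K" if "y \<in> D" "z \<in> Q" for y z
    using that unfolding K_def by blast
  have inner_eq: "inner a v = (\<Sum>i\<in>UNIV. a$i * v$i)" for v
    by (simp add: inner_vec_def)
  have apos: "0 \<le> a$i" for i
  proof (rule ccontr)
    assume "\<not> 0 \<le> a$i"
    then have ai: "a$i < 0" by simp
    define t where "t = (\<bar>inner a (L y0)\<bar> + 1) / (- a$i)"
    have t0: "t \<ge> 0" unfolding t_def by (rule divide_nonneg_pos) (use ai in auto)
    define z :: "real^'i" where "z = (\<chi> i'. if i' = i then t else 0)"
    have "z \<in> Q" using t0 by (simp add: Q_def z_def)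
    then have "inner a (L y0 + z) > b" using inK[OF y0D] ab(3) by blast
    moreover have "inner a z = a$i * t"
      by (simp add: inner_eq z_def if_distrib cong: if_cong)
    moreover have "a$i * t = - (\<bar>inner a (L y0)\<bar> + 1)" using ai by (simp add: t_def)
    ultimately have "inner a (L y0) - \<bar>inner a (L y0)\<bar> - 1 > b"
      by (simp add: inner_add_right)
    then show False using ab(2) by linarith
  qed
  define s where "s = (\<Sum>i\<in>UNIV. a$i)"
  have "s > 0"
  proof -
    obtain i where "a$i \<noteq> 0" using ab(1) by (auto simp: vec_eq_iff)
    then have "a$i > 0" using apos[of i] by simp
    then show ?thesis unfolding s_def
      by (intro sum_pos2[of UNIV i]) (auto simp: apos)
  qed
  have "\<exists>x. (\<forall>i. 0 \<le> x i) \<and> sum x UNIV = 1 \<and> (\<forall>j. (\<Sum>i\<in>UNIV. x i * A i j) > 0)"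
  proof (intro exI conjI allI)
    fix i show "0 \<le> a$i / s" using apos \<open>s > 0\<close> by simp
  next
    show "(\<Sum>i\<in>UNIV. a$i / s) = 1" using \<open>s > 0\<close> by (simp add: s_def sum_divide_distrib[symmetric])
  next
    fix j
    define e :: "real^'j" where "e = (\<chi> j'. if j' = j then 1 else 0)"
    have "e \<in> D" by (simp add: D_def e_def)
    have "0 \<in> Q" by (simp add: Q_def)
    have "inner a (L e + 0) > b" using inK[OF \<open>e \<in> D\<close> \<open>0 \<in> Q\<close>] ab(3) by blast
    moreover have "L e = (\<chi> i. A i j)"
      by (simp add: L_def e_def vec_eq_iff if_distrib cong: if_cong)
    ultimately have "(\<Sum>i\<in>UNIV. a$i * A i j) > 0" using ab(2) by (simp add: inner_eq)
    then have "(\<Sum>i\<in>UNIV. a$i * A i j) / s > 0" using \<open>s > 0\<close> by simp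
    then show "(\<Sum>i\<in>UNIV. a$i / s * A i j) > 0"
      by (simp add: sum_divide_distrib)
  qed
  then show ?thesis by blast
qed



lemma pq_exist:
  fixes \<phi> :: "'a::finite \<Rightarrow> 'a \<Rightarrow> real"
  assumes sym: "\<And>a b. \<phi> a b = \<phi> b a" and v0: "(SUP \<tau>X. INF \<tau>Y. phi_mix \<phi> \<tau>X \<tau>Y) = 0"
  shows "\<exists>p. \<forall>b. 0 \<le> phi_mix \<phi> p (return_pmf b)"
    and "\<exists>q. \<forall>b. phi_mix \<phi> q (return_pmf b) \<le> 0"
proof -
  show "\<exists>q. \<forall>b. phi_mix \<phi> q (return_pmf b) \<le> 0"
  proof -
    from ville[of \<phi>] show ?thesis
    proof
      assume "\<exists>y. (\<forall>j. 0 \<le> y j) \<and> sum y UNIV = 1 \<and> (\<forall>i. (\<Sum>j\<in>UNIV. \<phi> i j * y j) \<le> 0)"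
      then obtain y where y: "\<And>j. 0 \<le> y j" "sum y UNIV = 1" "\<And>i. (\<Sum>j\<in>UNIV. \<phi> i j * y j) \<le> 0" by blast
      obtain q where q: "\<And>a. pmf q a = y a" using pmf_of_weights[of y] y by blast
      have "phi_mix \<phi> q (return_pmf b) \<le> 0" for b
      proof -
        have "phi_mix \<phi> q (return_pmf b) = (\<Sum>j\<in>UNIV. \<phi> b j * y j)"
          unfolding phi_mix_ret q by (simp add: sym mult.commute)
        then show ?thesis using y(3)[of b] by simp
      qed
      then show ?thesis by blast
    next
      assume "\<exists>x. (\<forall>i. 0 \<le> x i) \<and> sum x UNIV = 1 \<and> (\<forall>j. (\<Sum>i\<in>UNIV. x i * \<phi> i j) > 0)"
      then obtain x where x: "\<And>i. 0 \<le> x i" "sum x UNIV = 1" "\<And>j. (\<Sum>i\<in>UNIV. x i * \<phi> i j) > 0" by blast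
      obtain p where p: "\<And>a. pmf p a = x a" using pmf_of_weights[of x] x by blast
      have pj: "phi_mix \<phi> p (return_pmf j) = (\<Sum>i\<in>UNIV. x i * \<phi> i j)" for j
        unfolding phi_mix_ret p ..
      obtain j0 where j0: "\<And>j. phi_mix \<phi> p (return_pmf j0) \<le> phi_mix \<phi> p (return_pmf j)"
        using ex_min_fin[of "\<lambda>j. phi_mix \<phi> p (return_pmf j)"] by blast
      define c where "c = phi_mix \<phi> p (return_pmf j0)"
      have c: "c > 0" unfolding c_def pj using x(3) .
      have "c \<le> phi_mix \<phi> p \<rho>" for \<rho> by (rule phi_mix_ge) (use j0 in \<open>auto simp: c_def\<close>)
      then have "c \<le> (INF \<rho>. phi_mix \<phi> p \<rho>)" by (intro cINF_greatest) auto
      also have "\<dots> \<le> (SUP \<tau>X. INF \<tau>Y. phi_mix \<phi> \<tau>X \<tau>Y)" by (rule cSUP_upper[OF _ ba_g]) simp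
      finally show ?thesis using c v0 by simp
    qed
  qed
  show "\<exists>p. \<forall>b. 0 \<le> phi_mix \<phi> p (return_pmf b)"
  proof -
    from ville[of "\<lambda>i j. - \<phi> i j"] show ?thesis
    proof
      assume "\<exists>y. (\<forall>j. 0 \<le> y j) \<and> sum y UNIV = 1 \<and> (\<forall>i. (\<Sum>j\<in>UNIV. - \<phi> i j * y j) \<le> 0)"
      then obtain y where y: "\<And>j. 0 \<le> y j" "sum y UNIV = 1" "\<And>i. (\<Sum>j\<in>UNIV. - \<phi> i j * y j) \<le> 0" by blast
      obtain q where q: "\<And>a. pmf q a = y a" using pmf_of_weights[of y] y by blast
      have "0 \<le> phi_mix \<phi> q (return_pmf b)" for b
      proof -
        have "phi_mix \<phi> q (return_pmf b) = (\<Sum>j\<in>UNIV. \<phi> b j * y j)"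
          unfolding phi_mix_ret q by (simp add: sym mult.commute)
        moreover have "(\<Sum>j\<in>UNIV. - \<phi> b j * y j) = - (\<Sum>j\<in>UNIV. \<phi> b j * y j)"
          by (simp add: sum_negf[symmetric])
        ultimately show ?thesis using y(3)[of b] by simp
      qed
      then show ?thesis by blast
    next
      assume "\<exists>x. (\<forall>i. 0 \<le> x i) \<and> sum x UNIV = 1 \<and> (\<forall>j. (\<Sum>i\<in>UNIV. x i * - \<phi> i j) > 0)"
      then obtain x where x: "\<And>i. 0 \<le> x i" "sum x UNIV = 1" "\<And>j. (\<Sum>i\<in>UNIV. x i * - \<phi> i j) > 0" by blast
      obtain p where p: "\<And>a. pmf p a = x a" using pmf_of_weights[of x] x by blast
      have pj: "phi_mix \<phi> p (return_pmf j) = - (\<Sum>i\<in>UNIV. x i * - \<phi> i j)" for j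
        unfolding phi_mix_ret p by (simp add: sum_negf[symmetric])
      obtain j0 where j0: "\<And>j. phi_mix \<phi> p (return_pmf j) \<le> phi_mix \<phi> p (return_pmf j0)"
        using ex_max_fin[of "\<lambda>j. phi_mix \<phi> p (return_pmf j)"] by blast
      define c where "c = phi_mix \<phi> p (return_pmf j0)"
      have c: "c < 0" unfolding c_def pj using x(3)[of j0] by simp
      have pr: "phi_mix \<phi> p \<rho> \<le> c" for \<rho> by (rule phi_mix_le) (use j0 in \<open>auto simp: c_def\<close>)
      have "(INF \<rho>. phi_mix \<phi> \<tau> \<rho>) \<le> c" for \<tau>
      proof -
        have "(INF \<rho>. phi_mix \<phi> \<tau> \<rho>) \<le> phi_mix \<phi> \<tau> p" by (rule gle)
        also have "\<dots> = phi_mix \<phi> p \<tau>" by (rule phi_mix_sym[OF sym])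
        finally show ?thesis using pr[of \<tau>] by simp
      qed
      then have "(SUP \<tau>X. INF \<tau>Y. phi_mix \<phi> \<tau>X \<tau>Y) \<le> c" by (intro cSUP_least) auto
      then show ?thesis using c v0 by simp
    qed
  qed
qed

lemma triv_v0:
  fixes \<phi> :: "'a::finite \<Rightarrow> 'a \<Rightarrow> real"
  assumes sym: "\<And>a b. \<phi> a b = \<phi> b a" and tr: "has_trivial_autocratic \<phi>"
  shows "(SUP \<tau>X. INF \<tau>Y. phi_mix \<phi> \<tau>X \<tau>Y) = 0"
proof -
  from tr obtain \<tau> where t: "\<And>b. phi_mix \<phi> \<tau> (return_pmf b) = 0" by (auto simp: has_trivial_autocratic_def)
  have z: "phi_mix \<phi> \<tau> \<rho> = 0" for \<rho>
    by (subst phi_mix_lin2) (simp add: t)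
  have "(INF \<rho>. phi_mix \<phi> \<tau> \<rho>) = 0" by (simp add: z)
  then have "0 \<le> (SUP \<tau>X. INF \<tau>Y. phi_mix \<phi> \<tau>X \<tau>Y)"
    by (metis cSUP_upper[OF UNIV_I ba_g])
  moreover have "(SUP \<tau>X. INF \<tau>Y. phi_mix \<phi> \<tau>X \<tau>Y) \<le> 0"
  proof (intro cSUP_least)
    fix x
    have "(INF \<rho>. phi_mix \<phi> x \<rho>) \<le> phi_mix \<phi> x \<tau>" by (rule gle)
    also have "\<dots> = 0" by (simp add: phi_mix_sym[OF sym] z)
    finally show "(INF \<rho>. phi_mix \<phi> x \<rho>) \<le> 0" .
  qed auto
  ultimately show ?thesis by simp
qed



definition Sg :: "('a \<Rightarrow> 'a \<Rightarrow> real) \<Rightarrow> 'a history \<Rightarrow> real" where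
  "Sg \<phi> h = sum_list (map (\<lambda>(a, b). \<phi> a b) h)"

lemma Sg_snoc: "Sg \<phi> (h @ [p]) = Sg \<phi> h + (case p of (a, b) \<Rightarrow> \<phi> a b)"
  by (simp add: Sg_def)

lemma Sg_nil: "Sg \<phi> [] = 0" by (simp add: Sg_def)

lemma fin_type_pmf: "finite (set_pmf (M :: ('b::finite) pmf))"
  by (rule finite_subset[OF subset_UNIV]) simp

lemma exp_hist_Suc:
  fixes f :: "('a::finite) history \<Rightarrow> real"
  shows "measure_pmf.expectation (hist_pmf \<sigma>X \<sigma>Y (Suc t)) f =
    measure_pmf.expectation (hist_pmf \<sigma>X \<sigma>Y t)
      (\<lambda>h. measure_pmf.expectation (pair_pmf (\<sigma>X h) (\<sigma>Y h)) (\<lambda>p. f (h @ [p])))"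
  by (simp only: hist_pmf.simps, subst exp_bind[OF hist_fin]) (auto intro: fin_type_pmf)

lemma exp_const: "measure_pmf.expectation M (\<lambda>_. c) = (c::real)"
  by simp

lemma exp_add_const:
  fixes f :: "'b::finite \<Rightarrow> real"
  shows "measure_pmf.expectation M (\<lambda>x. c + f x) = c + measure_pmf.expectation M f"
  by (subst Bochner_Integration.integral_add) (auto intro: integrable_measure_pmf_finite fin_type_pmf)

lemma exp_sq_shift:
  fixes f :: "'b::finite \<Rightarrow> real"
  shows "measure_pmf.expectation M (\<lambda>x. (s + f x)\<^sup>2) =
     s\<^sup>2 + 2 * s * measure_pmf.expectation M f + measure_pmf.expectation M (\<lambda>x. (f x)\<^sup>2)"
proof -
  have i: "integrable M g" for g :: "'b \<Rightarrow> real" by (intro integrable_measure_pmf_finite fin_type_pmf)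
  have "(\<lambda>x. (s + f x)\<^sup>2) = (\<lambda>x. s\<^sup>2 + (2 * s * f x + (f x)\<^sup>2))" by (auto simp: power2_sum)
  then show ?thesis
    by (simp add: Bochner_Integration.integral_add[OF i i] i)
qed



lemma sufficiency:
  fixes \<phi> :: "'a::finite \<Rightarrow> 'a \<Rightarrow> real"
  assumes p: "\<And>b. 0 \<le> phi_mix \<phi> p (return_pmf b)"
      and q: "\<And>b. phi_mix \<phi> q (return_pmf b) \<le> 0"
  shows "autocratic \<phi> 1 (\<lambda>h. if Sg \<phi> h > 0 then q else p)"
  unfolding autocratic_def
proof (simp, intro allI)
  fix \<sigma>Y :: "'a strategy"
  define \<sigma>X :: "'a strategy" where "\<sigma>X = (\<lambda>h. if Sg \<phi> h > 0 then q else p)"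
  define H where "H = hist_pmf \<sigma>X \<sigma>Y"
  define B where "B = bnd \<phi>"
  define E1 where "E1 = (\<lambda>t. measure_pmf.expectation (H t) (Sg \<phi>))"
  define E2 where "E2 = (\<lambda>t. measure_pmf.expectation (H t) (\<lambda>h. (Sg \<phi> h)\<^sup>2))"
  have B0: "0 \<le> B" unfolding B_def bnd_def by (intro sum_nonneg) auto
  have fB: "\<bar>case x of (a, b) \<Rightarrow> \<phi> a b\<bar> \<le> B" for x
    unfolding B_def bnd_def by (rule member_le_sum) auto
  have sgn: "Sg \<phi> h * phi_mix \<phi> (\<sigma>X h) \<rho> \<le> 0" for h \<rho>
  proof (cases "Sg \<phi> h > 0")
    case True
    have "phi_mix \<phi> q \<rho> \<le> 0" by (rule phi_mix_le) (rule q)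
    then show ?thesis using True by (simp add: \<sigma>X_def mult_nonneg_nonpos)
  next
    case False
    have "0 \<le> phi_mix \<phi> p \<rho>" by (rule phi_mix_ge) (rule p)
    then show ?thesis using False by (simp add: \<sigma>X_def mult_nonpos_nonneg)
  qed
  have iH: "integrable (measure_pmf (H t)) g" for t and g :: "'a history \<Rightarrow> real"
    unfolding H_def by (intro integrable_measure_pmf_finite hist_fin)
  have E1S: "E1 (Suc t) = E1 t + exp_round \<phi> \<sigma>X \<sigma>Y t" for t
  proof -
    have "E1 (Suc t) = measure_pmf.expectation (H t) (\<lambda>h. Sg \<phi> h + phi_mix \<phi> (\<sigma>X h) (\<sigma>Y h))"
      unfolding E1_def H_def exp_hist_Suc Sg_snoc exp_add_const phi_mix_def ..
    also have "\<dots> = E1 t + exp_round \<phi> \<sigma>X \<sigma>Y t"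
      unfolding E1_def exp_round_hist H_def
      by (subst Bochner_Integration.integral_add) (auto intro: integrable_measure_pmf_finite hist_fin)
    finally show ?thesis .
  qed
  have E1sum: "E1 (Suc T) = (\<Sum>t\<le>T. exp_round \<phi> \<sigma>X \<sigma>Y t)" for T
    by (induction T) (simp_all add: E1S, simp add: E1_def H_def Sg_nil)
  have E2S: "E2 (Suc t) \<le> E2 t + B\<^sup>2" for t
  proof -
    have "E2 (Suc t) = measure_pmf.expectation (H t) (\<lambda>h. (Sg \<phi> h)\<^sup>2 + 2 * Sg \<phi> h * phi_mix \<phi> (\<sigma>X h) (\<sigma>Y h)
          + measure_pmf.expectation (pair_pmf (\<sigma>X h) (\<sigma>Y h)) (\<lambda>x. (case x of (a, b) \<Rightarrow> \<phi> a b)\<^sup>2))"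
      unfolding E2_def H_def exp_hist_Suc Sg_snoc exp_sq_shift phi_mix_def ..
    also have "\<dots> \<le> measure_pmf.expectation (H t) (\<lambda>h. (Sg \<phi> h)\<^sup>2 + B\<^sup>2)"
    proof (rule integral_mono[OF iH iH])
      fix h
      have "measure_pmf.expectation (pair_pmf (\<sigma>X h) (\<sigma>Y h)) (\<lambda>x. (case x of (a, b) \<Rightarrow> \<phi> a b)\<^sup>2) \<le> B\<^sup>2"
      proof (rule exp_le[OF fin_type_pmf])
        fix x
        have "\<bar>case x of (a, b) \<Rightarrow> \<phi> a b\<bar>\<^sup>2 \<le> B\<^sup>2" by (rule power_mono[OF fB]) simp
        then show "(case x of (a, b) \<Rightarrow> \<phi> a b)\<^sup>2 \<le> B\<^sup>2" by simp
      qed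
      moreover have "Sg \<phi> h * phi_mix \<phi> (\<sigma>X h) (\<sigma>Y h) \<le> 0" by (rule sgn)
      ultimately show "(Sg \<phi> h)\<^sup>2 + 2 * Sg \<phi> h * phi_mix \<phi> (\<sigma>X h) (\<sigma>Y h)
          + measure_pmf.expectation (pair_pmf (\<sigma>X h) (\<sigma>Y h)) (\<lambda>x. (case x of (a, b) \<Rightarrow> \<phi> a b)\<^sup>2)
          \<le> (Sg \<phi> h)\<^sup>2 + B\<^sup>2" by linarith
    qed
    also have "\<dots> = E2 t + B\<^sup>2"
      unfolding E2_def H_def
      by (subst Bochner_Integration.integral_add) (auto intro: integrable_measure_pmf_finite hist_fin)
    finally show ?thesis .
  qed
  have E2b: "E2 T \<le> real T * B\<^sup>2" for T
  proof (induction T)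
    case 0 then show ?case by (simp add: E2_def H_def Sg_nil)
  next
    case (Suc T) then show ?case using E2S[of T] by (simp add: algebra_simps)
  qed
  have jen: "(E1 T)\<^sup>2 \<le> E2 T" for T
  proof -
    have i: "integrable (measure_pmf (H T)) g" for g :: "'a history \<Rightarrow> real"
      unfolding H_def by (intro integrable_measure_pmf_finite hist_fin)
    have "0 \<le> measure_pmf.variance (H T) (Sg \<phi>)"
      by (intro Bochner_Integration.integral_nonneg) simp
    also have "\<dots> = E2 T - (E1 T)\<^sup>2"
      unfolding E1_def E2_def by (rule measure_pmf.variance_eq[OF i i])
    finally show ?thesis by simp
  qed
  have bound: "\<bar>(\<Sum>t\<le>T. exp_round \<phi> \<sigma>X \<sigma>Y t) / real (T + 1)\<bar> \<le> B / sqrt (real (T + 1))" for T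
  proof -
    define n where "n = real (T + 1)"
    have n0: "n > 0" by (simp add: n_def)
    have "(E1 (Suc T))\<^sup>2 \<le> n * B\<^sup>2" using jen[of "Suc T"] E2b[of "Suc T"] by (simp add: n_def)
    then have "sqrt ((E1 (Suc T))\<^sup>2) \<le> sqrt (n * B\<^sup>2)" by (rule real_sqrt_le_mono)
    then have "\<bar>E1 (Suc T)\<bar> \<le> sqrt n * B" using B0 by (simp add: real_sqrt_mult)
    then have "\<bar>E1 (Suc T)\<bar> / n \<le> sqrt n * B / n" using n0 by (simp add: divide_right_mono)
    also have "sqrt n * B / n = B / sqrt n"
      using n0 by (simp add: field_simps)
    finally show ?thesis by (simp add: E1sum n_def)
  qed
  have lim0: "(\<lambda>T. B / sqrt (real (T + 1))) \<longlonglongrightarrow> 0"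
  proof -
    have "(\<lambda>T::nat. 1 / sqrt (real (T + 1))) \<longlonglongrightarrow> 0" by real_asymp
    then have "(\<lambda>T::nat. B * (1 / sqrt (real (T + 1)))) \<longlonglongrightarrow> B * 0" by (intro tendsto_mult tendsto_const)
    then show ?thesis by simp
  qed
  show "(\<lambda>T. (\<Sum>t\<le>T. exp_round \<phi> (\<lambda>h. if 0 < Sg \<phi> h then q else p) \<sigma>Y t) / (1 + real T)) \<longlonglongrightarrow> 0"
  proof (rule Lim_null_comparison[OF _ lim0])
    show "\<forall>\<^sub>F T in sequentially. norm ((\<Sum>t\<le>T. exp_round \<phi> (\<lambda>h. if 0 < Sg \<phi> h then q else p) \<sigma>Y t) / (1 + real T))
        \<le> B / sqrt (real (T + 1))"
      using bound by (simp add: \<sigma>X_def add.commute)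
  qed
qed


theorem proposition12:
  fixes \<phi> :: "'a::finite \<Rightarrow> 'a \<Rightarrow> real"
  assumes "\<And>a b. \<phi> a b = \<phi> b a"
  shows "enforceable \<phi> \<longleftrightarrow>
           has_trivial_autocratic \<phi> \<or>
           (SUP \<tau>X. INF \<tau>Y. phi_mix \<phi> \<tau>X \<tau>Y) = 0"
proof
  assume "enforceable \<phi>"
  then obtain \<delta> \<sigma>X where d: "\<delta> \<in> {0..1}" and au: "autocratic \<phi> \<delta> \<sigma>X"
    by (auto simp: enforceable_def)
  have "(SUP \<tau>X. INF \<tau>Y. phi_mix \<phi> \<tau>X \<tau>Y) = 0"
    by (rule necessity[where \<phi>=\<phi>, OF assms au]) (use d in auto)
  then show "has_trivial_autocratic \<phi> \<or> (SUP \<tau>X. INF \<tau>Y. phi_mix \<phi> \<tau>X \<tau>Y) = 0" by simp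
next
  assume "has_trivial_autocratic \<phi> \<or> (SUP \<tau>X. INF \<tau>Y. phi_mix \<phi> \<tau>X \<tau>Y) = 0"
  then have v0: "(SUP \<tau>X. INF \<tau>Y. phi_mix \<phi> \<tau>X \<tau>Y) = 0" using triv_v0[where \<phi>=\<phi>, OF assms] by blast
  obtain p where p: "\<And>b. 0 \<le> phi_mix \<phi> p (return_pmf b)" using pq_exist(1)[where \<phi>=\<phi>, OF assms v0] by blast
  obtain q where q: "\<And>b. phi_mix \<phi> q (return_pmf b) \<le> 0" using pq_exist(2)[where \<phi>=\<phi>, OF assms v0] by blast
  have "autocratic \<phi> 1 (\<lambda>h. if Sg \<phi> h > 0 then q else p)" by (rule sufficiency[OF p q])
  then show "enforceable \<phi>" unfolding enforceable_def by (intro bexI[of _ 1] exI) auto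
qed

end
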